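(* Let $X,Y$ be Banach spaces, $\bar x\in X$, and let $A\in\mathcal L(X,Y)$ be surjective. For every $h>0$ let $X_h\subset X$, $Y_h\subset Y$ be closed subspaces (with the induced norms), let $F_h\colon X_h\to Y_h$ be continuous and let $\tilde x_h\in X_h$. Assume: (i) $\epsilon_h:=\|F_h(\tilde x_h)\|_Y+\|\bar x-\tilde x_h\|_X\to0$ as $h\to0$; (ii) there exist $A_h\in\mathcal L(X_h,Y_h)$, $R>0$ and a function $c\colon(0,\infty)\times(0,\infty)\to[0,\infty)$, nondecreasing in each variable with $\lim_{(h,r)\to0}c(h,r)=0$, such that $\|F_h(x)-F_h(y)-A_h(x-y)\|_Y\le c(h,r)\|x-y\|_X$ for all $x,y\in B_{X_h}(\tilde x_h,r)$, all $0<r<R$ and all $h>0$; (iii) there exist $\widehat A_h\in\mathcal L(X,Y)$ with $\widehat A_h(X_h)\subset Y_h$ and $\widehat A_h^{-1}(Y_h)\subset X_h$, such that $\lim_{h\to0}\|A-\widehat A_h\|_{\mathcal L(X,Y)}=0$ and $\lim_{h\to0}\|A_h-\widehat A_h\|_{\mathcal L(X_h,Y_h)}=0$. Then there is $h_0>0$ such that for every $0<h\le h_0$ there exists $\bar x_h\in X_h$ with $F_h(\bar x_h)=0$, $$\|\bar x-\bar x_h\|_X\le\Big(1+\frac{2}{\mathfrak C_{X,Y}(A)}\Big)\|\bar x-\tilde x_h\|_X+\frac{2}{\mathfrak C_{X,Y}(A)}\|F_h(\tilde x_h)\|_Y,$$ and $\operatorname{sur}_{X_h,Y_h}(F_h;\bar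 x_h)\ge\frac12\mathfrak C_{X,Y}(A)$. Moreover, if $A$ is an isomorphism, there exist $0<h_1\le h_0$ and $r_1>0$ such that for every $0<h\le h_1$, $F_h$ is strongly metrically regular near $\bar x_h$ and $\bar x_h$ is the unique element of $B_X(\bar x,r_1)\cap X_h$ with $F_h(\bar x_h)=0$.
   Context: $B_X(x,r)$ denotes a closed ball. For $T\in\mathcal L(X,Y)$, the Banach constant $\mathfrak C_{X,Y}(T)$ is the supremum of all $\kappa>0$ with $B_Y(0,\kappa)\subset T(B_X(0,1))$ if $T$ is surjective, and $\mathfrak C_{X,Y}(T)=0$ otherwise. A continuous map $F\colon X\to Y$ is metrically regular near $\bar x$ if there exist $\kappa,R>0$ with $B_Y(F(x),\kappa r)\cap B_Y(F(\bar x),R)\subset F(B_X(x,r))$ for all $0<r\le R$, $x\in B_X(\bar x,R)$; $\operatorname{sur}_{X,Y}(F;\bar x)$ is the supremum of such $\kappa$. $F$ is strongly metrically regular near $\bar x$ if it is metrically regular near $\bar x$ and there are neighborhoods $U$ of $\bar x$ and $V$ of $F(\bar x)$ such that $F^{-1}(y)\cap U$ is a single point for every $y\in V$. For maps $X_h\to Y_h$ the same notions are used with $X_h,Y_h$ in place of $X,Y$. *)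

theory Defs
  imports "HOL-Analysis.Analysis" "HOL-Library.Extended_Real"
begin

text \<open>Banach constant of a bounded linear map between whole spaces (value in ereal,
  so that it is \<infinity> e.g. for a trivial target space).\<close>
definition banach_const :: "('a::real_normed_vector \<Rightarrow> 'b::real_normed_vector) \<Rightarrow> ereal" where
  "banach_const T = (if surj T
     then Sup (ereal ` {\<kappa>. \<kappa> > 0 \<and> cball 0 \<kappa> \<subseteq> T ` cball 0 1}) else 0)"

definition metric_reg_with :: "'a::real_normed_vector set \<Rightarrow> 'b::real_normed_vector set
     \<Rightarrow> ('a \<Rightarrow> 'b) \<Rightarrow> 'a \<Rightarrow> real \<Rightarrow> bool" where
  "metric_reg_with X Y F xb \<kappa> \<longleftrightarrow> \<kappa> > 0 \<and> (\<exists>R>0. \<forall>r x. 0 < r \<and> r \<le> R \<and> x \<in> X \<inter> cball xb R \<longrightarrow>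
      Y \<inter> cball (F x) (\<kappa> * r) \<inter> cball (F xb) R \<subseteq> F ` (X \<inter> cball x r))"

definition metrically_regular_on :: "'a::real_normed_vector set \<Rightarrow> 'b::real_normed_vector set
     \<Rightarrow> ('a \<Rightarrow> 'b) \<Rightarrow> 'a \<Rightarrow> bool" where
  "metrically_regular_on X Y F xb \<longleftrightarrow> (\<exists>\<kappa>. metric_reg_with X Y F xb \<kappa>)"

definition sur_on :: "'a::real_normed_vector set \<Rightarrow> 'b::real_normed_vector set
     \<Rightarrow> ('a \<Rightarrow> 'b) \<Rightarrow> 'a \<Rightarrow> ereal" where
  "sur_on X Y F xb = Sup (ereal ` {\<kappa>. metric_reg_with X Y F xb \<kappa>})"

definition strongly_metrically_regular_on :: "'a::real_normed_vector set \<Rightarrow> 'b::real_normed_vector set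
     \<Rightarrow> ('a \<Rightarrow> 'b) \<Rightarrow> 'a \<Rightarrow> bool" where
  "strongly_metrically_regular_on X Y F xb \<longleftrightarrow> metrically_regular_on X Y F xb \<and>
     (\<exists>U V. open U \<and> xb \<in> U \<and> open V \<and> F xb \<in> V \<and>
        (\<forall>y \<in> Y \<inter> V. \<exists>!x. x \<in> X \<inter> U \<and> F x = y))"

definition bounded_linear_on :: "'a::real_normed_vector set \<Rightarrow> 'b::real_normed_vector set
     \<Rightarrow> ('a \<Rightarrow> 'b) \<Rightarrow> bool" where
  "bounded_linear_on S T f \<longleftrightarrow> (\<forall>x\<in>S. f x \<in> T) \<and>
     (\<forall>x\<in>S. \<forall>y\<in>S. f (x + y) = f x + f y) \<and> (\<forall>c. \<forall>x\<in>S. f (c *\<^sub>R x) = c *\<^sub>R f x) \<and>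
     (\<exists>K. \<forall>x\<in>S. norm (f x) \<le> K * norm x)"

definition onorm_on :: "'a::real_normed_vector set \<Rightarrow> ('a \<Rightarrow> 'b::real_normed_vector) \<Rightarrow> real" where
  "onorm_on S f = Sup {norm (f x) | x. x \<in> S \<and> norm x \<le> 1}"

end

theory Submission
  imports Defs
begin


lemma geom_sum_le:
  fixes q :: real assumes "0 \<le> q" "q < 1"
  shows "(\<Sum>j<k. q ^ j) \<le> 1 / (1 - q)"
proof -
  have "(\<Sum>j<k. q ^ j) = (1 - q ^ k) / (1 - q)" using sum_gp_strict[of q k] assms by simp
  also have "\<dots> \<le> 1 / (1 - q)" using assms by (intro divide_right_mono) auto
  finally show ?thesis .
qed

lemma ggl:
  fixes G L :: "'a::banach \<Rightarrow> 'b::real_normed_vector"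
  assumes XSc: "closed XS" and XSadd: "\<forall>x\<in>XS. \<forall>u\<in>XS. x + u \<in> XS"
    and YSsub: "\<forall>a\<in>YS. \<forall>b\<in>YS. a - b \<in> YS"
    and GY: "G ` (XS \<inter> cball x0 r) \<subseteq> YS"
    and Lprop: "\<forall>z\<in>YS. \<exists>u\<in>XS. \<kappa> * norm u \<le> norm z \<and> norm (z - L u) \<le> \<theta> * norm z"
    and est: "\<forall>x\<in>XS \<inter> cball x0 r. \<forall>z\<in>XS \<inter> cball x0 r. norm (G x - G z - L (x - z)) \<le> \<epsilon> * norm (x - z)"
    and cont: "continuous_on (XS \<inter> cball x0 r) G"
    and kpos: "\<kappa> > 0" and th: "\<theta> \<ge> 0" and ep: "\<epsilon> \<ge> 0" and q1: "\<theta> + \<epsilon> / \<kappa> < 1"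
    and x0: "x0 \<in> XS" and y: "y \<in> YS"
    and small: "norm (y - G x0) \<le> \<kappa> * (1 - (\<theta> + \<epsilon> / \<kappa>)) * r"
  shows "\<exists>x\<in>XS \<inter> cball x0 r. G x = y \<and> \<kappa> * (1 - (\<theta> + \<epsilon> / \<kappa>)) * norm (x - x0) \<le> norm (y - G x0)"
proof -
  define q where "q = \<theta> + \<epsilon> / \<kappa>"
  define d where "d = norm (y - G x0)"
  define b where "b = \<kappa> * (1 - q)"
  have q0: "0 \<le> q" using th ep kpos by (simp add: q_def)
  have q1': "q < 1" using q1 by (simp add: q_def)
  have bpos: "b > 0" using kpos q1' by (simp add: b_def)
  have d0: "0 \<le> d" by (simp add: d_def)
  have dr: "d \<le> b * r" using small by (simp add: d_def b_def q_def)
  define nxt where "nxt x = (SOME u. u \<in> XS \<and> \<kappa> * norm u \<le> norm (y - G x) \<and> norm ((y - G x) - L u) \<le> \<theta> * norm (y - G x))" for x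
  have nxt: "nxt x \<in> XS \<and> \<kappa> * norm (nxt x) \<le> norm (y - G x) \<and> norm ((y - G x) - L (nxt x)) \<le> \<theta> * norm (y - G x)"
    if "x \<in> XS \<inter> cball x0 r" for x
  proof -
    have "G x \<in> YS" using GY that by blast
    then have "y - G x \<in> YS" using YSsub y by blast
    then obtain u where "u \<in> XS \<and> \<kappa> * norm u \<le> norm (y - G x) \<and> norm ((y - G x) - L u) \<le> \<theta> * norm (y - G x)"
      using Lprop by blast
    then show ?thesis unfolding nxt_def by (rule someI)
  qed
  define xs where "xs = rec_nat x0 (\<lambda>_ x. x + nxt x)"
  have xs0: "xs 0 = x0" and xsS: "xs (Suc k) = xs k + nxt (xs k)" for k by (simp_all add: xs_def)
  have geo: "(d / \<kappa>) * (\<Sum>j<k. q ^ j) \<le> d / b" for k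
  proof -
    have "(d / \<kappa>) * (\<Sum>j<k. q ^ j) \<le> (d / \<kappa>) * (1 / (1 - q))"
      using geom_sum_le[OF q0 q1'] d0 kpos by (intro mult_left_mono) auto
    also have "\<dots> = d / b" by (simp add: b_def)
    finally show ?thesis .
  qed
  have dbr: "d / b \<le> r" using dr bpos by (simp add: divide_le_eq mult.commute)
  have inv: "xs k \<in> XS \<and> norm (xs k - x0) \<le> (d / \<kappa>) * (\<Sum>j<k. q ^ j) \<and> norm (y - G (xs k)) \<le> q ^ k * d" for k
  proof (induction k)
    case 0
    then show ?case using x0 by (simp add: xs0 d_def)
  next
    case (Suc k)
    let ?x = "xs k" let ?u = "nxt (xs k)"
    have xin: "?x \<in> XS \<inter> cball x0 r" using Suc geo[of k] dbr by (auto simp: dist_norm norm_minus_commute)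
    note n = nxt[OF xin]
    have un: "norm ?u \<le> q ^ k * d / \<kappa>"
      using n Suc kpos by (simp add: field_simps)
    have A1: "xs (Suc k) \<in> XS" using XSadd Suc n by (simp add: xsS)
    have "norm (xs (Suc k) - x0) = norm ((?x - x0) + ?u)" by (simp add: xsS algebra_simps)
    also have "\<dots> \<le> norm (?x - x0) + norm ?u" by (rule norm_triangle_ineq)
    also have "\<dots> \<le> (d / \<kappa>) * (\<Sum>j<k. q ^ j) + q ^ k * d / \<kappa>" using Suc un by linarith
    also have "\<dots> = (d / \<kappa>) * (\<Sum>j<Suc k. q ^ j)" by (simp add: algebra_simps)
    finally have A2: "norm (xs (Suc k) - x0) \<le> (d / \<kappa>) * (\<Sum>j<Suc k. q ^ j)" .
    have x1in: "xs (Suc k) \<in> XS \<inter> cball x0 r" using A1 A2 geo[of "Suc k"] dbr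
      by (auto simp: dist_norm norm_minus_commute)
    have "norm (y - G (xs (Suc k))) = norm (((y - G ?x) - L ?u) - (G (xs (Suc k)) - G ?x - L (xs (Suc k) - ?x)))"
      by (simp add: xsS algebra_simps)
    also have "\<dots> \<le> norm ((y - G ?x) - L ?u) + norm (G (xs (Suc k)) - G ?x - L (xs (Suc k) - ?x))"
      by (rule norm_triangle_ineq4)
    also have "\<dots> \<le> \<theta> * norm (y - G ?x) + \<epsilon> * norm (xs (Suc k) - ?x)"
      using n est x1in xin by (meson add_mono)
    also have "\<dots> \<le> \<theta> * (q ^ k * d) + \<epsilon> * (q ^ k * d / \<kappa>)"
      using Suc un th ep by (intro add_mono mult_left_mono) (auto simp: xsS)
    also have "\<dots> = q ^ Suc k * d" using kpos by (simp add: q_def field_simps)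
    finally show ?case using A1 A2 by simp
  qed
  define u where "u k = nxt (xs k)" for k
  have un: "norm (u k) \<le> (d / \<kappa>) * q ^ k" for k
  proof -
    have "xs k \<in> XS \<inter> cball x0 r" using inv[of k] geo[of k] dbr by (auto simp: dist_norm norm_minus_commute)
    then have "\<kappa> * norm (u k) \<le> q ^ k * d" using nxt inv[of k] unfolding u_def by (meson order_trans)
    then show ?thesis using kpos by (simp add: field_simps)
  qed
  have sumg: "summable (\<lambda>k. (d / \<kappa>) * q ^ k)" using q0 q1' by (intro summable_mult summable_geometric) auto
  have sumn: "summable (\<lambda>k. norm (u k))" by (rule summable_comparison_test[OF _ sumg]) (use un in auto)
  have sumu: "summable u" using sumn by (rule summable_norm_cancel)
  have xs_eq: "xs k = x0 + (\<Sum>j<k. u j)" for k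
    by (induction k) (simp_all add: xs0 xsS u_def algebra_simps)
  define xl where "xl = x0 + suminf u"
  have lim: "xs \<longlonglongrightarrow> xl" unfolding xs_eq xl_def by (intro tendsto_add tendsto_const summable_LIMSEQ sumu)
  have xlX: "xl \<in> XS" using XSc lim inv closed_sequentially by blast
  have "(\<lambda>k. norm (xs k - x0)) \<longlonglongrightarrow> norm (xl - x0)" by (intro tendsto_norm tendsto_diff lim tendsto_const)
  then have nb: "norm (xl - x0) \<le> d / b"
    by (rule LIMSEQ_le_const2) (use inv geo order_trans in blast)
  have xlin: "xl \<in> XS \<inter> cball x0 r" using xlX nb dbr by (auto simp: dist_norm norm_minus_commute)
  have xsin: "xs k \<in> XS \<inter> cball x0 r" for k using inv[of k] geo[of k] dbr by (auto simp: dist_norm norm_minus_commute)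
  have "(\<lambda>k. G (xs k)) \<longlonglongrightarrow> G xl"
    using continuous_on_tendsto_compose[OF cont lim xlin] xsin by (simp add: o_def)
  moreover have "(\<lambda>k. G (xs k)) \<longlonglongrightarrow> y"
  proof -
    have "(\<lambda>k. q ^ k * d) \<longlonglongrightarrow> 0 * d" using q0 q1' by (intro tendsto_mult tendsto_const LIMSEQ_power_zero) auto
    then have "(\<lambda>k. q ^ k * d) \<longlonglongrightarrow> 0" by simp
    then have "(\<lambda>k. y - G (xs k)) \<longlonglongrightarrow> 0"
      by (rule Lim_null_comparison[rotated]) (use inv in auto)
    then have "(\<lambda>k. y - (y - G (xs k))) \<longlonglongrightarrow> y - 0" by (intro tendsto_diff tendsto_const)
    then show ?thesis by simp
  qed
  ultimately have "G xl = y" using LIMSEQ_unique by blast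
  moreover have "b * norm (xl - x0) \<le> d" using nb bpos by (simp add: field_simps)
  ultimately show ?thesis using xlin unfolding b_def q_def d_def by blast
qed



lemma open_mapping_approx:
  fixes A :: "'a::banach \<Rightarrow> 'b::banach"
  assumes lin: "bounded_linear A" and su: "surj A"
  shows "\<exists>\<kappa>>0. \<forall>y. \<exists>x. \<kappa> * norm x \<le> norm y \<and> norm (y - A x) \<le> (1/2) * norm y"
proof -
  interpret A: bounded_linear A by (rule lin)
  define T where "T n = closure (A ` cball 0 (real (Suc n)))" for n
  have "\<exists>n. interior (T n) \<noteq> {}"
  proof (rule ccontr)
    assume "\<not> ?thesis"
    then have "euclidean interior_of \<Union>(range T) = {}"
      by (intro Baire_category_alt) (auto simp: completely_metrizable_space_euclidean T_def)
    moreover have "\<Union>(range T) = UNIV"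
    proof -
      { fix y :: 'b
        obtain x where "y = A x" using su by (metis surj_def)
        obtain n where "norm x \<le> real (Suc n)" by (metis real_arch_simple le_SucI of_nat_le_iff order_trans)
        then have "y \<in> T n" unfolding T_def using \<open>y = A x\<close> closure_subset by fastforce
        then have "y \<in> \<Union>(range T)" by blast }
      then show ?thesis by blast
    qed
    ultimately show False by simp
  qed
  then obtain n y0 where "y0 \<in> interior (T n)" by blast
  then obtain e where e: "e > 0" "ball y0 e \<subseteq> T n" using mem_interior by blast
  define N where "N = real (Suc n)"
  have Npos: "N > 0" by (simp add: N_def)
  have appr: "\<exists>x. norm x \<le> 2 * N \<and> norm (z - A x) < \<delta>" if "norm z < e" "\<delta> > 0" for z \<delta>
  proof -
    have "y0 + z \<in> closure (A ` cball 0 N)" using e that by (auto simp: T_def N_def dist_norm)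
    then obtain w1 where w1: "w1 \<in> A ` cball 0 N" "dist w1 (y0 + z) < \<delta>/2"
      using closure_approachable \<open>\<delta> > 0\<close> half_gt_zero by blast
    have "y0 \<in> closure (A ` cball 0 N)" using e by (auto simp: T_def N_def)
    then obtain w2 where w2: "w2 \<in> A ` cball 0 N" "dist w2 y0 < \<delta>/2"
      using closure_approachable \<open>\<delta> > 0\<close> half_gt_zero by blast
    obtain x1 x2 where x: "norm x1 \<le> N" "norm x2 \<le> N" "w1 = A x1" "w2 = A x2" using w1 w2 by auto
    have "norm (x1 - x2) \<le> 2 * N" using x norm_triangle_ineq4[of x1 x2] by linarith
    moreover have "norm (z - A (x1 - x2)) < \<delta>"
    proof -
      have "z - A (x1 - x2) = ((y0 + z) - w1) - (y0 - w2)" using x by (simp add: A.diff algebra_simps)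
      then have "norm (z - A (x1 - x2)) \<le> norm ((y0 + z) - w1) + norm (y0 - w2)"
        by (metis norm_triangle_ineq4)
      then show ?thesis using w1 w2 by (simp add: dist_norm norm_minus_commute)
    qed
    ultimately show ?thesis by blast
  qed
  define \<kappa> where "\<kappa> = e / (4 * N)"
  have kpos: "\<kappa> > 0" using e Npos by (simp add: \<kappa>_def)
  have "\<exists>x. \<kappa> * norm x \<le> norm y \<and> norm (y - A x) \<le> (1/2) * norm y" for y
  proof (cases "y = 0")
    case True then show ?thesis by (intro exI[of _ 0]) simp
  next
    case False
    then have ny: "norm y > 0" by simp
    define s where "s = 2 * norm y / e"
    have spos: "s > 0" using ny e by (simp add: s_def)
    define z where "z = (1 / s) *\<^sub>R y"
    have nz: "norm z = e / 2" using ny e spos by (simp add: z_def s_def)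
    obtain x where x: "norm x \<le> 2 * N" "norm (z - A x) < e / 4" using appr[of z "e/4"] nz e by auto
    have "\<kappa> * norm (s *\<^sub>R x) \<le> \<kappa> * (s * (2 * N))" using x spos kpos by (simp add: mult_left_mono)
    also have "\<dots> = norm y" using e Npos ny by (simp add: \<kappa>_def s_def field_simps)
    finally have 1: "\<kappa> * norm (s *\<^sub>R x) \<le> norm y" .
    have "y - A (s *\<^sub>R x) = s *\<^sub>R (z - A x)" using spos by (simp add: z_def A.scaleR algebra_simps)
    then have "norm (y - A (s *\<^sub>R x)) = s * norm (z - A x)" using spos by simp
    also have "\<dots> \<le> s * (e / 4)" using x spos by (intro mult_left_mono) auto
    also have "\<dots> = (1/2) * norm y" using e by (simp add: s_def)
    finally show ?thesis using 1 by blast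
  qed
  then show ?thesis using kpos by blast
qed

lemma open_mapping:
  fixes A :: "'a::banach \<Rightarrow> 'b::banach"
  assumes lin: "bounded_linear A" and su: "surj A"
  shows "\<exists>\<kappa>>0. \<forall>y. \<exists>x. A x = y \<and> \<kappa> * norm x \<le> norm y"
proof -
  interpret A: bounded_linear A by (rule lin)
  obtain \<kappa> where kpos: "\<kappa> > 0" and ap: "\<forall>y. \<exists>x. \<kappa> * norm x \<le> norm y \<and> norm (y - A x) \<le> (1/2) * norm y"
    using open_mapping_approx[OF lin su] by blast
  have "\<exists>x. A x = y \<and> (\<kappa> / 2) * norm x \<le> norm y" for y
  proof -
    have "\<exists>x\<in>UNIV \<inter> cball 0 (norm y / (\<kappa> * (1/2))). A x = y \<and> \<kappa> * (1 - (1/2 + 0 / \<kappa>)) * norm (x - 0) \<le> norm (y - A 0)"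
    proof (rule ggl[where YS=UNIV and L=A and \<theta>="1/2" and \<epsilon>=0])
      show "\<forall>x\<in>UNIV \<inter> cball 0 (norm y / (\<kappa> * (1 / 2))). \<forall>z\<in>UNIV \<inter> cball 0 (norm y / (\<kappa> * (1 / 2))).
          norm (A x - A z - A (x - z)) \<le> 0 * norm (x - z)" by (simp add: A.diff)
      show "continuous_on (UNIV \<inter> cball 0 (norm y / (\<kappa> * (1 / 2)))) A"
        using A.continuous_on continuous_on_id by blast
      show "norm (y - A 0) \<le> \<kappa> * (1 - (1 / 2 + 0 / \<kappa>)) * (norm y / (\<kappa> * (1 / 2)))"
        using kpos by simp
    qed (use kpos ap in auto)
    then show ?thesis by auto
  qed
  then show ?thesis using kpos by (intro exI[of _ "\<kappa>/2"]) auto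
qed



lemma banach_const_finite:
  fixes A :: "'a::banach \<Rightarrow> 'b::banach"
  assumes lin: "bounded_linear A" and su: "surj A" and nt: "\<exists>y::'b. y \<noteq> 0"
  shows "\<exists>c0>0. banach_const A = ereal c0 \<and>
     (\<forall>\<kappa>. 0 < \<kappa> \<longrightarrow> \<kappa> < c0 \<longrightarrow> (\<forall>y. \<exists>x. A x = y \<and> \<kappa> * norm x \<le> norm y))"
proof -
  interpret A: bounded_linear A by (rule lin)
  define S where "S = {\<kappa>. \<kappa> > 0 \<and> cball 0 \<kappa> \<subseteq> A ` cball 0 1}"
  have bc: "banach_const A = Sup (ereal ` S)" using su by (simp add: banach_const_def S_def)
  obtain \<kappa>0 where k0: "\<kappa>0 > 0" "\<forall>y. \<exists>x. A x = y \<and> \<kappa>0 * norm x \<le> norm y"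
    using open_mapping[OF lin su] by blast
  have k0S: "\<kappa>0 \<in> S"
  proof -
    have "y \<in> A ` cball 0 1" if "norm y \<le> \<kappa>0" for y
    proof -
      obtain x where "A x = y" "\<kappa>0 * norm x \<le> norm y" using k0 by blast
      then have "\<kappa>0 * norm x \<le> \<kappa>0 * 1" using that by simp
      then have "norm x \<le> 1" using k0 by simp
      then show ?thesis using \<open>A x = y\<close> by auto
    qed
    then show ?thesis using k0 by (auto simp: S_def)
  qed
  obtain y0 :: 'b where y0: "y0 \<noteq> 0" using nt by blast
  have ub: "\<kappa> \<le> onorm A" if "\<kappa> \<in> S" for \<kappa>
  proof -
    have kp: "\<kappa> > 0" and sub: "cball 0 \<kappa> \<subseteq> A ` cball 0 1" using that by (auto simp: S_def)
    define y where "y = (\<kappa> / norm y0) *\<^sub>R y0"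
    have ny: "norm y = \<kappa>" using kp y0 by (simp add: y_def)
    then obtain x where x: "norm x \<le> 1" "y = A x" using sub by force
    have "\<kappa> = norm (A x)" using ny x by simp
    also have "\<dots> \<le> onorm A * norm x" by (rule onorm[OF lin])
    also have "\<dots> \<le> onorm A * 1" using x onorm_pos_le[OF lin] by (intro mult_left_mono) auto
    finally show ?thesis by simp
  qed
  have le1: "banach_const A \<le> ereal (onorm A)" unfolding bc using ub by (auto intro!: Sup_least)
  have le2: "ereal \<kappa>0 \<le> banach_const A" unfolding bc using k0S by (auto intro!: Sup_upper)
  obtain c0 where c0: "banach_const A = ereal c0" using le1 le2 by (cases "banach_const A") auto
  have c0pos: "c0 > 0" using le2 c0 k0 by simp
  have "\<forall>y. \<exists>x. A x = y \<and> \<kappa> * norm x \<le> norm y" if kp: "0 < \<kappa>" and kc: "\<kappa> < c0" for \<kappa>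
  proof -
    have "ereal \<kappa> < Sup (ereal ` S)" using kc c0 bc by simp
    then obtain k' where k': "k' \<in> S" "\<kappa> < k'" by (auto simp: less_Sup_iff)
    then have k'p: "k' > 0" and sub: "cball 0 k' \<subseteq> A ` cball 0 1" by (auto simp: S_def)
    show ?thesis
    proof
      fix y :: 'b
      show "\<exists>x. A x = y \<and> \<kappa> * norm x \<le> norm y"
      proof (cases "y = 0")
        case True then show ?thesis by (intro exI[of _ 0]) simp
      next
        case False
        define y' where "y' = (k' / norm y) *\<^sub>R y"
        have "norm y' = k'" using k'p False by (simp add: y'_def)
        then obtain x' where x': "norm x' \<le> 1" "y' = A x'" using sub by force
        define x where "x = (norm y / k') *\<^sub>R x'"
        have "A x = (norm y / k') *\<^sub>R y'" using x' by (simp add: x_def A.scaleR)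
        also have "\<dots> = y" using k'p False by (simp add: y'_def)
        finally have 1: "A x = y" .
        have "\<kappa> * norm x = \<kappa> * (norm y / k') * norm x'" using k'p by (simp add: x_def)
        also have "\<dots> \<le> k' * (norm y / k') * 1" using x' k' kp k'p
          by (intro mult_mono) auto
        also have "\<dots> = norm y" using k'p by simp
        finally show ?thesis using 1 by blast
      qed
    qed
  qed
  then show ?thesis using c0 c0pos by blast
qed

lemma banach_const_trivial:
  fixes A :: "'a::banach \<Rightarrow> 'b::banach"
  assumes su: "surj A" and A0: "A 0 = 0" and tr: "\<forall>y::'b. y = 0"
  shows "banach_const A = \<infinity>"
proof -
  have "{\<kappa>. \<kappa> > 0 \<and> cball 0 \<kappa> \<subseteq> A ` cball 0 1} = {0<..}"
  proof -
    have "cball 0 \<kappa> \<subseteq> A ` cball 0 1" for \<kappa>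
    proof
      fix y assume "y \<in> cball (0::'b) \<kappa>"
      have "y = A 0" using tr A0 by metis
      then show "y \<in> A ` cball 0 1" by auto
    qed
    then show ?thesis by auto
  qed
  then have bc: "banach_const A = Sup (ereal ` {0<..})" using su by (simp add: banach_const_def)
  have "Sup (ereal ` {0<..}) = (top::ereal)"
  proof (subst Sup_eq_top_iff, intro allI impI)
    fix x :: ereal assume "x < top"
    then obtain t where "x \<le> ereal t" by (cases x) auto
    define s where "s = max 1 (t + 1)"
    have sp: "s > 0" "t < s" by (auto simp: s_def)
    have "x < ereal s" using \<open>x \<le> ereal t\<close> \<open>t < s\<close> by (metis le_less_trans less_ereal.simps(1))
    moreover have "ereal s \<in> ereal ` {0<..}" using sp by auto
    ultimately show "\<exists>i\<in>ereal ` {0<..}. x < i" by blast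
  qed
  then show ?thesis using bc by (simp add: top_ereal_def)
qed

lemma sur_on_top:
  assumes "\<And>\<kappa>. \<kappa> > 0 \<Longrightarrow> metric_reg_with X Y F xb \<kappa>"
  shows "sur_on X Y F xb = \<infinity>"
proof -
  have "Sup (ereal ` {\<kappa>. metric_reg_with X Y F xb \<kappa>}) = (top::ereal)"
  proof (subst Sup_eq_top_iff, intro allI impI)
    fix x :: ereal assume "x < top"
    then obtain t where "x \<le> ereal t" by (cases x) auto
    define s where "s = max 1 (t + 1)"
    have sp: "s > 0" "t < s" by (auto simp: s_def)
    have "x < ereal s" using \<open>x \<le> ereal t\<close> \<open>t < s\<close> by (metis le_less_trans less_ereal.simps(1))
    moreover have "ereal s \<in> ereal ` {\<kappa>. metric_reg_with X Y F xb \<kappa>}"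
      using assms[of s] sp by auto
    ultimately show "\<exists>i\<in>ereal ` {\<kappa>. metric_reg_with X Y F xb \<kappa>}. x < i" by blast
  qed
  then show ?thesis by (simp add: sur_on_def top_ereal_def)
qed



lemma per_h:
  fixes A Ahat Ah :: "'a::banach \<Rightarrow> 'b::banach" and F :: "'a \<Rightarrow> 'b"
  assumes X: "subspace X" "closed X" and Y: "subspace Y"
    and Fc: "continuous_on X F" and FY: "F ` X \<subseteq> Y" and xt: "xt \<in> X"
    and Ahatl: "bounded_linear Ahat" and AhatY: "Ahat -` Y \<subseteq> X"
    and Al: "bounded_linear A"
    and Aopen: "\<forall>y. \<exists>x. A x = y \<and> (3 * c0 / 4) * norm x \<le> norm y"
    and c0: "c0 > 0" and r0: "r0 > 0"
    and est: "\<forall>x\<in>X \<inter> cball xt r0. \<forall>z\<in>X \<inter> cball xt r0. norm (F x - F z - Ah (x - z)) \<le> ch * norm (x - z)"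
    and ch: "ch \<ge> 0" and d1: "\<forall>w. norm (A w - Ahat w) \<le> \<delta>1 * norm w" and d1p: "\<delta>1 \<ge> 0"
    and d2: "\<forall>w\<in>X. norm (Ah w - Ahat w) \<le> \<delta>2 * norm w" and d2p: "\<delta>2 \<ge> 0"
    and sm: "\<delta>1 + \<delta>2 + ch \<le> c0 / 4"
    and small: "(1 + 2 / c0) * (norm (F xt) + norm (xbar - xt)) \<le> r0 / 4"
  shows "\<exists>xb. xb \<in> X \<and> F xb = 0 \<and>
     norm (xbar - xb) \<le> (1 + 2 / c0) * norm (xbar - xt) + (2 / c0) * norm (F xt) \<and>
     metric_reg_with X Y F xb (c0 / 2) \<and> xb \<in> cball xbar (r0 / 4) \<and>
     (bij A \<longrightarrow> strongly_metrically_regular_on X Y F xb \<and>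
        (\<forall>x\<in>cball xbar (r0 / 4) \<inter> X. F x = 0 \<longrightarrow> x = xb))"
proof -
  interpret Ahat: bounded_linear Ahat by (rule Ahatl)
  interpret A: bounded_linear A by (rule Al)
  define \<kappa>A where "\<kappa>A = 3 * c0 / 4"
  define \<kappa>1 where "\<kappa>1 = \<kappa>A - \<delta>1"
  define \<epsilon> where "\<epsilon> = ch + \<delta>2"
  have kA: "\<kappa>A > 0" using c0 by (simp add: \<kappa>A_def)
  have k1: "\<kappa>1 > 0" using c0 sm ch d2p by (simp add: \<kappa>1_def \<kappa>A_def)
  have epp: "\<epsilon> \<ge> 0" using ch d2p by (simp add: \<epsilon>_def)
  have gap: "c0 / 2 \<le> \<kappa>1 - \<epsilon>" using sm by (simp add: \<kappa>1_def \<kappa>A_def \<epsilon>_def)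
  have Pert: "\<exists>x. Ahat x = y \<and> \<kappa>1 * norm x \<le> norm y" for y
  proof -
    have "\<exists>x\<in>UNIV \<inter> cball 0 (norm y / \<kappa>1). Ahat x = y \<and> \<kappa>A * (1 - (0 + \<delta>1 / \<kappa>A)) * norm (x - 0) \<le> norm (y - Ahat 0)"
    proof (rule ggl[where YS=UNIV and L=A and \<theta>=0 and \<epsilon>=\<delta>1])
      show "\<forall>x\<in>UNIV \<inter> cball 0 (norm y / \<kappa>1). \<forall>z\<in>UNIV \<inter> cball 0 (norm y / \<kappa>1).
          norm (Ahat x - Ahat z - A (x - z)) \<le> \<delta>1 * norm (x - z)"
      proof (intro ballI)
        fix x z :: 'a
        have "norm (Ahat x - Ahat z - A (x - z)) = norm (A (x - z) - Ahat (x - z))"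
          by (simp add: Ahat.diff norm_minus_commute)
        then show "norm (Ahat x - Ahat z - A (x - z)) \<le> \<delta>1 * norm (x - z)" using d1 by simp
      qed
      show "continuous_on (UNIV \<inter> cball 0 (norm y / \<kappa>1)) Ahat"
        using Ahat.continuous_on continuous_on_id by blast
      show "0 + \<delta>1 / \<kappa>A < 1" using k1 kA by (simp add: \<kappa>1_def)
      show "norm (y - Ahat 0) \<le> \<kappa>A * (1 - (0 + \<delta>1 / \<kappa>A)) * (norm y / \<kappa>1)"
        using kA k1 by (simp add: \<kappa>1_def field_simps)
      show "\<forall>z\<in>UNIV. \<exists>u\<in>UNIV. \<kappa>A * norm u \<le> norm z \<and> norm (z - A u) \<le> 0 * norm z"
        using Aopen by (auto simp: \<kappa>A_def)
    qed (use kA d1p in auto)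
    moreover have "\<kappa>A * (1 - (0 + \<delta>1 / \<kappa>A)) = \<kappa>1" using kA by (simp add: \<kappa>1_def field_simps)
    ultimately show ?thesis by auto
  qed
  have Lh: "\<forall>z\<in>Y. \<exists>u\<in>X. \<kappa>1 * norm u \<le> norm z \<and> norm (z - Ahat u) \<le> 0 * norm z"
  proof
    fix z assume "z \<in> Y"
    obtain u where "Ahat u = z" "\<kappa>1 * norm u \<le> norm z" using Pert by blast
    moreover then have "u \<in> X" using AhatY \<open>z \<in> Y\<close> by blast
    ultimately show "\<exists>u\<in>X. \<kappa>1 * norm u \<le> norm z \<and> norm (z - Ahat u) \<le> 0 * norm z" by auto
  qed
  have estF: "norm (F x - F z - Ahat (x - z)) \<le> \<epsilon> * norm (x - z)"
    if "x \<in> X \<inter> cball xt r0" "z \<in> X \<inter> cball xt r0" for x z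
  proof -
    have xz: "x - z \<in> X" using that X subspace_diff by blast
    have "F x - F z - Ahat (x - z) = (F x - F z - Ah (x - z)) + (Ah (x - z) - Ahat (x - z))" by simp
    then have "norm (F x - F z - Ahat (x - z)) \<le> norm (F x - F z - Ah (x - z)) + norm (Ah (x - z) - Ahat (x - z))"
      by (metis norm_triangle_ineq)
    also have "\<dots> \<le> ch * norm (x - z) + \<delta>2 * norm (x - z)" using est that d2 xz by (intro add_mono) auto
    finally show ?thesis by (simp add: \<epsilon>_def algebra_simps)
  qed
  have solve: "\<exists>x\<in>X \<inter> cball x0 \<rho>. F x = y \<and> (c0 / 2) * norm (x - x0) \<le> norm (y - F x0)"
    if x0: "x0 \<in> X" and sub: "cball x0 \<rho> \<subseteq> cball xt r0" and y: "y \<in> Y" and yc: "norm (y - F x0) \<le> (c0 / 2) * \<rho>"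
    for x0 \<rho> y
  proof -
    have eqk: "\<kappa>1 * (1 - (0 + \<epsilon> / \<kappa>1)) = \<kappa>1 - \<epsilon>" using k1 by (simp add: field_simps)
    have "0 \<le> c0 / 2 * \<rho>" using order_trans[OF norm_ge_zero yc] .
    then have "\<rho> \<ge> 0" using c0 by (simp add: zero_le_mult_iff)
    have "\<exists>x\<in>X \<inter> cball x0 \<rho>. F x = y \<and> \<kappa>1 * (1 - (0 + \<epsilon> / \<kappa>1)) * norm (x - x0) \<le> norm (y - F x0)"
    proof (rule ggl[where YS=Y and L=Ahat and \<theta>=0])
      show "closed X" using X by simp
      show "\<forall>x\<in>X. \<forall>u\<in>X. x + u \<in> X" using X subspace_add by blast
      show "\<forall>a\<in>Y. \<forall>b\<in>Y. a - b \<in> Y" using Y subspace_diff by blast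
      show "F ` (X \<inter> cball x0 \<rho>) \<subseteq> Y" using FY by blast
      show "\<forall>x\<in>X \<inter> cball x0 \<rho>. \<forall>z\<in>X \<inter> cball x0 \<rho>. norm (F x - F z - Ahat (x - z)) \<le> \<epsilon> * norm (x - z)"
        using estF sub by blast
      show "continuous_on (X \<inter> cball x0 \<rho>) F" using Fc by (rule continuous_on_subset) blast
      show "0 + \<epsilon> / \<kappa>1 < 1" using gap k1 c0 by (simp add: field_simps)
      show "norm (y - F x0) \<le> \<kappa>1 * (1 - (0 + \<epsilon> / \<kappa>1)) * \<rho>"
        unfolding eqk using order_trans[OF yc mult_right_mono[OF gap \<open>\<rho> \<ge> 0\<close>]] .
    qed (use Lh k1 epp x0 y in auto)
    then obtain x where x: "x \<in> X \<inter> cball x0 \<rho>" "F x = y" "(\<kappa>1 - \<epsilon>) * norm (x - x0) \<le> norm (y - F x0)"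
      unfolding eqk by blast
    have "(c0 / 2) * norm (x - x0) \<le> (\<kappa>1 - \<epsilon>) * norm (x - x0)" by (rule mult_right_mono[OF gap norm_ge_zero])
    then have "(c0 / 2) * norm (x - x0) \<le> norm (y - F x0)" using x(3) by linarith
    then show ?thesis using x(1,2) by blast
  qed
  define e0 where "e0 = norm (F xt)"
  define e1 where "e1 = norm (xbar - xt)"
  have e0p: "e0 \<ge> 0" and e1p: "e1 \<ge> 0" by (simp_all add: e0_def e1_def)
  have c2: "2 / c0 > 0" using c0 by simp
  have sm': "(1 + 2 / c0) * (e0 + e1) \<le> r0 / 4" using small by (simp add: e0_def e1_def)
  have sum_le: "e1 + (2 / c0) * e0 \<le> (1 + 2 / c0) * (e0 + e1)"
  proof -
    have "(1 + 2 / c0) * (e0 + e1) = e1 + (2 / c0) * e0 + (e0 + (2 / c0) * e1)" by (simp add: algebra_simps add_divide_distrib)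
    moreover have "(2 / c0) * e1 \<ge> 0" using c2 e1p by simp
    ultimately show ?thesis using e0p by linarith
  qed
  have "(2 / c0) * e0 \<ge> 0" using c2 e0p by simp
  then have e1s: "e1 \<le> r0 / 4" using sum_le sm' by linarith
  have e0s: "(2 / c0) * e0 \<le> r0 / 4" using sum_le sm' e1p by linarith
  obtain xb where xb: "xb \<in> X \<inter> cball xt ((2 / c0) * e0)" "F xb = 0" "(c0 / 2) * norm (xb - xt) \<le> norm (0 - F xt)"
  proof -
    have "cball xt ((2 / c0) * e0) \<subseteq> cball xt r0" using e0s r0 by (intro subset_cball) auto
    moreover have "norm (0 - F xt) \<le> (c0 / 2) * ((2 / c0) * e0)" using c0 by (simp add: e0_def)
    ultimately show ?thesis using solve[OF xt _ _] that subspace_0[OF Y] by blast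
  qed
  have xbX: "xb \<in> X" using xb by blast
  have dxb: "norm (xb - xt) \<le> (2 / c0) * e0" using xb by (auto simp: dist_norm norm_minus_commute)
  have dxb4: "norm (xb - xt) \<le> r0 / 4" using dxb e0s by linarith
  have bnd: "norm (xbar - xb) \<le> e1 + (2 / c0) * e0"
  proof -
    have "norm (xbar - xb) \<le> norm (xbar - xt) + norm (xt - xb)" by (rule norm_diff_triangle_le[OF order_refl order_refl])
    then show ?thesis using dxb by (simp add: e1_def norm_minus_commute)
  qed
  have B1: "norm (xbar - xb) \<le> (1 + 2 / c0) * norm (xbar - xt) + (2 / c0) * norm (F xt)"
  proof -
    have "(2 / c0) * e1 \<ge> 0" using c2 e1p by simp
    moreover have "(1 + 2 / c0) * e1 + (2 / c0) * e0 = (e1 + (2 / c0) * e0) + (2 / c0) * e1" by (simp add: algebra_simps)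
    ultimately show ?thesis using bnd by (simp add: e0_def e1_def)
  qed
  have B2: "xb \<in> cball xbar (r0 / 4)" using bnd sum_le sm' by (simp add: dist_norm)
  have MR: "metric_reg_with X Y F xb (c0 / 2)"
    unfolding metric_reg_with_def
  proof (intro conjI exI[of _ "r0 / 4"] allI impI subsetI)
    show "c0 / 2 > 0" "r0 / 4 > 0" using c0 r0 by auto
    fix \<rho> x y
    assume a: "0 < \<rho> \<and> \<rho> \<le> r0 / 4 \<and> x \<in> X \<inter> cball xb (r0 / 4)"
      and y: "y \<in> Y \<inter> cball (F x) (c0 / 2 * \<rho>) \<inter> cball (F xb) (r0 / 4)"
    have "norm (x - xt) \<le> norm (x - xb) + norm (xb - xt)" by (rule norm_diff_triangle_le[OF order_refl order_refl])
    then have "norm (x - xt) \<le> r0 / 2" using a dxb4 by (simp add: dist_norm norm_minus_commute)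
    then have sub: "cball x \<rho> \<subseteq> cball xt r0"
    proof (intro subsetI)
      fix v assume v: "v \<in> cball x \<rho>" and xx: "norm (x - xt) \<le> r0 / 2"
      have "norm (v - xt) \<le> norm (v - x) + norm (x - xt)" by (rule norm_diff_triangle_le[OF order_refl order_refl])
      moreover have "norm (v - x) \<le> \<rho>" using v by (simp add: dist_norm norm_minus_commute)
      ultimately show "v \<in> cball xt r0" using xx a by (simp add: dist_norm norm_minus_commute)
    qed
    have "norm (y - F x) \<le> c0 / 2 * \<rho>" using y by (simp add: dist_norm norm_minus_commute)
    then obtain z where "z \<in> X \<inter> cball x \<rho>" "F z = y" using solve[OF _ sub] a y by blast
    then show "y \<in> F ` (X \<inter> cball x \<rho>)" by blast
  qed
  have rest: "bij A \<longrightarrow> strongly_metrically_regular_on X Y F xb \<and>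
        (\<forall>x\<in>cball xbar (r0 / 4) \<inter> X. F x = 0 \<longrightarrow> x = xb)"
  proof
    assume bA: "bij A"
    have lowA: "\<kappa>A * norm w \<le> norm (A w)" for w
    proof -
      obtain w' where "A w' = A w" "\<kappa>A * norm w' \<le> norm (A w)" using Aopen by (auto simp: \<kappa>A_def)
      moreover then have "w' = w" using bA by (meson bij_def injD)
      ultimately show ?thesis by simp
    qed
    have lowH: "\<kappa>1 * norm w \<le> norm (Ahat w)" for w
    proof -
      have "norm (A w) \<le> norm (Ahat w) + norm (A w - Ahat w)" by (metis add.commute norm_triangle_sub)
      moreover have "norm (A w - Ahat w) \<le> \<delta>1 * norm w" using d1 by blast
      moreover have "\<kappa>1 * norm w = \<kappa>A * norm w - \<delta>1 * norm w" by (simp add: \<kappa>1_def algebra_simps)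
      ultimately show ?thesis using lowA[of w] by linarith
    qed
    have inj: "x = z" if "x \<in> X \<inter> cball xt r0" "z \<in> X \<inter> cball xt r0" "F x = F z" for x z
    proof -
      have "\<kappa>1 * norm (x - z) \<le> \<epsilon> * norm (x - z)"
        using lowH[of "x - z"] estF[OF that(1,2)] that(3) by simp
      then have "(\<kappa>1 - \<epsilon>) * norm (x - z) \<le> 0" by (simp add: algebra_simps)
      moreover have "\<kappa>1 - \<epsilon> > 0" using gap c0 by linarith
      ultimately have "norm (x - z) \<le> 0" by (simp add: mult_le_0_iff)
      then show ?thesis by simp
    qed
    have xbt: "xb \<in> X \<inter> cball xt r0" using xbX dxb4 r0 by (auto simp: dist_norm norm_minus_commute)
    have SMR: "strongly_metrically_regular_on X Y F xb"
      unfolding strongly_metrically_regular_on_def metrically_regular_on_def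
    proof (intro conjI exI[of _ "c0 / 2"] exI[of _ "ball xb (r0 / 4)"] exI[of _ "ball (F xb) (c0 / 2 * (r0 / 4))"] ballI)
      show "metric_reg_with X Y F xb (c0 / 2)" by (rule MR)
      show "open (ball xb (r0 / 4))" "xb \<in> ball xb (r0 / 4)" "open (ball (F xb) (c0 / 2 * (r0 / 4)))"
        "F xb \<in> ball (F xb) (c0 / 2 * (r0 / 4))" using r0 c0 by auto
      fix y assume y: "y \<in> Y \<inter> ball (F xb) (c0 / 2 * (r0 / 4))"
      define \<rho> where "\<rho> = norm (y - F xb) / (c0 / 2)"
      have rl: "\<rho> < r0 / 4" using y c0 by (simp add: \<rho>_def dist_norm norm_minus_commute field_simps)
      have r0': "\<rho> \<ge> 0" using c0 by (simp add: \<rho>_def)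
      have sub: "cball xb \<rho> \<subseteq> cball xt r0"
      proof
        fix v assume "v \<in> cball xb \<rho>"
        then have "norm (v - xb) \<le> \<rho>" by (simp add: dist_norm norm_minus_commute)
        moreover have "norm (v - xt) \<le> norm (v - xb) + norm (xb - xt)" by (rule norm_diff_triangle_le[OF order_refl order_refl])
        ultimately have "norm (v - xt) \<le> r0" using rl dxb4 r0 by linarith
        then show "v \<in> cball xt r0" by (simp add: dist_norm norm_minus_commute)
      qed
      have "norm (y - F xb) \<le> (c0 / 2) * \<rho>" using c0 by (simp add: \<rho>_def)
      then obtain x where x: "x \<in> X \<inter> cball xb \<rho>" "F x = y" using solve[OF xbX sub] y by blast
      have xU: "x \<in> X \<inter> ball xb (r0 / 4)" using x rl by auto
      have U_sub: "X \<inter> ball xb (r0 / 4) \<subseteq> X \<inter> cball xt r0"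
      proof
        fix v assume v: "v \<in> X \<inter> ball xb (r0 / 4)"
        then have "norm (v - xb) < r0 / 4" by (simp add: dist_norm norm_minus_commute)
        moreover have "norm (v - xt) \<le> norm (v - xb) + norm (xb - xt)" by (rule norm_diff_triangle_le[OF order_refl order_refl])
        ultimately have "norm (v - xt) \<le> r0" using dxb4 r0 by linarith
        then show "v \<in> X \<inter> cball xt r0" using v by (simp add: dist_norm norm_minus_commute)
      qed
      show "\<exists>!x. x \<in> X \<inter> ball xb (r0 / 4) \<and> F x = y"
      proof (rule ex1I[of _ x])
        show "x \<in> X \<inter> ball xb (r0 / 4) \<and> F x = y" using xU x by blast
        fix x' assume "x' \<in> X \<inter> ball xb (r0 / 4) \<and> F x' = y"
        then show "x' = x" using inj U_sub xU x by blast
      qed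
    qed
    have UQ: "\<forall>x\<in>cball xbar (r0 / 4) \<inter> X. F x = 0 \<longrightarrow> x = xb"
    proof (intro ballI impI)
      fix x assume x: "x \<in> cball xbar (r0 / 4) \<inter> X" and Fx: "F x = 0"
      have "norm (x - xt) \<le> norm (x - xbar) + norm (xbar - xt)" by (rule norm_diff_triangle_le[OF order_refl order_refl])
      then have "x \<in> X \<inter> cball xt r0" using x e1s r0 by (simp add: dist_norm norm_minus_commute e1_def)
      then show "x = xb" using inj xbt Fx xb by simp
    qed
    show "strongly_metrically_regular_on X Y F xb \<and> (\<forall>x\<in>cball xbar (r0 / 4) \<inter> X. F x = 0 \<longrightarrow> x = xb)"
      using SMR UQ by blast
  qed
  show ?thesis using xbX xb(2) B1 MR B2 rest by blast
qed



lemma ereal_bound: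
  assumes "c0 > 0" "b = ereal c0" "x \<le> (1 + 2 / c0) * y + (2 / c0) * z"
  shows "ereal x \<le> (1 + 2 / b) * ereal y + (2 / b) * ereal z"
proof -
  have d: "2 / b = ereal (2 / c0)" using assms(1,2) by (simp add: divide_ereal_def divide_inverse)
  have e: "(1 + ereal (2 / c0)) * ereal y + ereal (2 / c0) * ereal z = ereal ((1 + 2 / c0) * y + (2 / c0) * z)"
    by (simp only: one_ereal_def plus_ereal.simps times_ereal.simps)
  show ?thesis unfolding d e using assms(3) by (simp only: ereal_less_eq(3))
qed

lemma ereal_div_inf: "(2::ereal) / \<infinity> = 0"
  unfolding divide_ereal_def by (simp only: inverse_ereal.simps(2) ereal_mult_zero)

lemma ereal_triv2: "b = \<infinity> \<Longrightarrow> ereal a \<le> (1 + 2 / b) * ereal a + (2 / b) * ereal c"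
  by (simp only: ereal_div_inf add_0_right mult_1 ereal_zero_mult add_0_right order_refl)

lemma onorm_on_bound:
  fixes f :: "'a::real_normed_vector \<Rightarrow> 'b::real_normed_vector"
  assumes S0: "0 \<in> S" and Ssc: "\<forall>c. \<forall>x\<in>S. c *\<^sub>R x \<in> S"
    and fsc: "\<forall>c. \<forall>x\<in>S. f (c *\<^sub>R x) = c *\<^sub>R f x" and K: "\<forall>x\<in>S. norm (f x) \<le> K * norm x"
  shows "\<forall>w\<in>S. norm (f w) \<le> onorm_on S f * norm w" "onorm_on S f \<ge> 0"
proof -
  define M where "M = {norm (f x) | x. x \<in> S \<and> norm x \<le> 1}"
  have on: "onorm_on S f = Sup M" by (simp add: onorm_on_def M_def)
  have bdd: "bdd_above M"
  proof (rule bdd_aboveI[of _ "\<bar>K\<bar>"])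
    fix m assume "m \<in> M"
    then obtain x where x: "x \<in> S" "norm x \<le> 1" "m = norm (f x)" by (auto simp: M_def)
    have "K * norm x \<le> \<bar>K\<bar> * 1" using x by (metis abs_ge_self abs_ge_zero mult_mono norm_ge_zero)
    then show "m \<le> \<bar>K\<bar>" using K x by force
  qed
  have f0: "f 0 = 0" using fsc S0 by (metis scaleR_zero_left)
  have "0 \<in> M" using S0 f0 by (force simp: M_def)
  then show "onorm_on S f \<ge> 0" unfolding on by (rule cSup_upper2[OF _ order_refl bdd])
  show "\<forall>w\<in>S. norm (f w) \<le> onorm_on S f * norm w"
  proof
    fix w assume w: "w \<in> S"
    show "norm (f w) \<le> onorm_on S f * norm w"
    proof (cases "w = 0")
      case True then show ?thesis using f0 by simp
    next
      case False
      define u where "u = (1 / norm w) *\<^sub>R w"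
      have "u \<in> S" using Ssc w by (simp add: u_def)
      moreover have "norm u \<le> 1" using False by (simp add: u_def)
      ultimately have "norm (f u) \<in> M" by (auto simp: M_def)
      then have le: "norm (f u) \<le> onorm_on S f" unfolding on using bdd by (rule cSup_upper)
      have "f u = (1 / norm w) *\<^sub>R f w" using fsc w by (simp add: u_def)
      then have "norm (f u) = norm (f w) / norm w" by simp
      then have "norm (f w) = norm w * norm (f u)" using False by simp
      also have "\<dots> \<le> norm w * onorm_on S f" by (rule mult_left_mono[OF le norm_ge_zero])
      finally show ?thesis by (simp add: mult.commute)
    qed
  qed
qed

theorem mainTheorem3:
  fixes A :: "'a::banach \<Rightarrow> 'b::banach"
    and xbar :: 'a
    and Xh :: "real \<Rightarrow> 'a set" and Yh :: "real \<Rightarrow> 'b set"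
    and F :: "real \<Rightarrow> 'a \<Rightarrow> 'b" and xt :: "real \<Rightarrow> 'a"
    and Ah Ahat :: "real \<Rightarrow> 'a \<Rightarrow> 'b"
    and R :: real and c :: "real \<Rightarrow> real \<Rightarrow> real"
  assumes A_lin: "bounded_linear A" and A_surj: "surj A"
    and subsp: "\<And>h. h > 0 \<Longrightarrow> subspace (Xh h) \<and> closed (Xh h) \<and> subspace (Yh h) \<and> closed (Yh h)"
    and F_cont: "\<And>h. h > 0 \<Longrightarrow> continuous_on (Xh h) (F h) \<and> F h ` Xh h \<subseteq> Yh h"
    and xt_in: "\<And>h. h > 0 \<Longrightarrow> xt h \<in> Xh h"
    and eps: "((\<lambda>h. norm (F h (xt h)) + norm (xbar - xt h)) \<longlongrightarrow> 0) (at_right 0)"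
    and Ah_lin: "\<And>h. h > 0 \<Longrightarrow> bounded_linear_on (Xh h) (Yh h) (Ah h)"
    and R_pos: "R > 0"
    and c_nonneg: "\<And>h r. h > 0 \<Longrightarrow> r > 0 \<Longrightarrow> c h r \<ge> 0"
    and c_mono1: "\<And>h h' r. 0 < h \<Longrightarrow> h \<le> h' \<Longrightarrow> r > 0 \<Longrightarrow> c h r \<le> c h' r"
    and c_mono2: "\<And>h r r'. h > 0 \<Longrightarrow> 0 < r \<Longrightarrow> r \<le> r' \<Longrightarrow> c h r \<le> c h r'"
    and c_lim: "((\<lambda>(h, r). c h r) \<longlongrightarrow> 0) (at (0, 0) within ({0<..} \<times> {0<..}))"
    and approx: "\<And>h r x y. h > 0 \<Longrightarrow> 0 < r \<Longrightarrow> r < R \<Longrightarrow>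
        x \<in> Xh h \<inter> cball (xt h) r \<Longrightarrow> y \<in> Xh h \<inter> cball (xt h) r \<Longrightarrow>
        norm (F h x - F h y - Ah h (x - y)) \<le> c h r * norm (x - y)"
    and Ahat_lin: "\<And>h. h > 0 \<Longrightarrow> bounded_linear (Ahat h)"
    and Ahat_img: "\<And>h. h > 0 \<Longrightarrow> Ahat h ` Xh h \<subseteq> Yh h"
    and Ahat_pre: "\<And>h. h > 0 \<Longrightarrow> Ahat h -` Yh h \<subseteq> Xh h"
    and Ahat_lim1: "((\<lambda>h. onorm (\<lambda>x. A x - Ahat h x)) \<longlongrightarrow> 0) (at_right 0)"
    and Ahat_lim2: "((\<lambda>h. onorm_on (Xh h) (\<lambda>x. Ah h x - Ahat h x)) \<longlongrightarrow> 0) (at_right 0)"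
  shows "\<exists>h0 > 0. \<exists>xb :: real \<Rightarrow> 'a.
     (\<forall>h. 0 < h \<and> h \<le> h0 \<longrightarrow>
        xb h \<in> Xh h \<and> F h (xb h) = 0 \<and>
        ereal (norm (xbar - xb h)) \<le> (1 + 2 / banach_const A) * ereal (norm (xbar - xt h))
            + (2 / banach_const A) * ereal (norm (F h (xt h))) \<and>
        sur_on (Xh h) (Yh h) (F h) (xb h) \<ge> banach_const A / 2) \<and>
     (bij A \<longrightarrow> (\<exists>h1 r1. 0 < h1 \<and> h1 \<le> h0 \<and> r1 > 0 \<and>
        (\<forall>h. 0 < h \<and> h \<le> h1 \<longrightarrow>
           strongly_metrically_regular_on (Xh h) (Yh h) (F h) (xb h) \<and>
           xb h \<in> cball xbar r1 \<and>
           (\<forall>x \<in> cball xbar r1 \<inter> Xh h. F h x = 0 \<longrightarrow> x = xb h))))"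
proof (cases "\<exists>y::'b. y \<noteq> 0")
  case False
  then have tr: "\<forall>y::'b. y = 0" by blast
  interpret A: bounded_linear A by (rule A_lin)
  have bc: "banach_const A = \<infinity>" using banach_const_trivial[OF A_surj A.zero tr] .
  have Fz: "F h x = 0" for h x by (rule tr[rule_format])
  have MR: "metric_reg_with (Xh h) (Yh h) (F h) x \<kappa>" if "x \<in> Xh h" "\<kappa> > 0" for h x \<kappa>
    unfolding metric_reg_with_def
  proof (intro conjI exI[of _ 1] allI impI subsetI)
    fix r :: real and z y assume a: "0 < r \<and> r \<le> 1 \<and> z \<in> Xh h \<inter> cball x 1"
    then have "z \<in> Xh h \<inter> cball z r" by auto
    moreover have "y = F h z" using tr[rule_format, of y] tr[rule_format, of "F h z"] by (rule trans[OF _ sym])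
    ultimately show "y \<in> F h ` (Xh h \<inter> cball z r)" by blast
  qed (use that in auto)
  have part1: "\<forall>h. 0 < h \<and> h \<le> 1 \<longrightarrow> xt h \<in> Xh h \<and> F h (xt h) = 0 \<and>
        ereal (norm (xbar - xt h)) \<le> (1 + 2 / banach_const A) * ereal (norm (xbar - xt h))
            + (2 / banach_const A) * ereal (norm (F h (xt h))) \<and>
        sur_on (Xh h) (Yh h) (F h) (xt h) \<ge> banach_const A / 2"
  proof (intro allI impI conjI)
    fix h :: real assume h: "0 < h \<and> h \<le> 1"
    show "xt h \<in> Xh h" using xt_in h by blast
    show "F h (xt h) = 0" by (rule Fz)
    show "ereal (norm (xbar - xt h)) \<le> (1 + 2 / banach_const A) * ereal (norm (xbar - xt h))
            + (2 / banach_const A) * ereal (norm (F h (xt h)))"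
      by (rule ereal_triv2[OF bc])
    have "sur_on (Xh h) (Yh h) (F h) (xt h) = \<infinity>" using MR xt_in h by (intro sur_on_top) blast
    then show "banach_const A / 2 \<le> sur_on (Xh h) (Yh h) (F h) (xt h)" by simp
  qed
  have part2: "bij A \<longrightarrow> (\<exists>h1 r1. 0 < h1 \<and> h1 \<le> 1 \<and> r1 > 0 \<and>
        (\<forall>h. 0 < h \<and> h \<le> h1 \<longrightarrow>
           strongly_metrically_regular_on (Xh h) (Yh h) (F h) (xt h) \<and>
           xt h \<in> cball xbar r1 \<and>
           (\<forall>x \<in> cball xbar r1 \<inter> Xh h. F h x = 0 \<longrightarrow> x = xt h)))"
  proof
    assume bA: "bij A"
    have trA: "x = y" for x y :: 'a
    proof -
      have "A x = A y" using tr[rule_format, of "A x"] tr[rule_format, of "A y"] by (rule trans[OF _ sym])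
      then show ?thesis using bA by (meson bij_def injD)
    qed
    show "\<exists>h1 r1. 0 < h1 \<and> h1 \<le> 1 \<and> r1 > 0 \<and>
        (\<forall>h. 0 < h \<and> h \<le> h1 \<longrightarrow>
           strongly_metrically_regular_on (Xh h) (Yh h) (F h) (xt h) \<and>
           xt h \<in> cball xbar r1 \<and>
           (\<forall>x \<in> cball xbar r1 \<inter> Xh h. F h x = 0 \<longrightarrow> x = xt h))"
    proof (intro exI[of _ 1] conjI allI impI)
      fix h :: real assume h: "0 < h \<and> h \<le> 1"
      show "strongly_metrically_regular_on (Xh h) (Yh h) (F h) (xt h)"
        unfolding strongly_metrically_regular_on_def metrically_regular_on_def
      proof (intro conjI exI[of _ 1] exI[of _ UNIV] ballI)
        show "metric_reg_with (Xh h) (Yh h) (F h) (xt h) 1" using MR xt_in h by simp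
        fix y assume "y \<in> Yh h \<inter> UNIV"
        show "\<exists>!x. x \<in> Xh h \<inter> UNIV \<and> F h x = y"
        proof (rule ex1I[of _ "xt h"])
          have "F h (xt h) = y" using tr[rule_format, of "F h (xt h)"] tr[rule_format, of y] by (rule trans[OF _ sym])
          then show "xt h \<in> Xh h \<inter> UNIV \<and> F h (xt h) = y" using xt_in h by blast
          fix x assume "x \<in> Xh h \<inter> UNIV \<and> F h x = y"
          show "x = xt h" by (rule trA)
        qed
      qed auto
      have "xbar = xt h" by (rule trA)
      then show "xt h \<in> cball xbar 1" by simp
      show "\<forall>x \<in> cball xbar 1 \<inter> Xh h. F h x = 0 \<longrightarrow> x = xt h" by (intro ballI impI trA)
    qed auto
  qed
  show ?thesis
    apply (rule exI[of _ 1])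
    apply (rule conjI)
     apply simp
    apply (rule exI[of _ xt])
    using part1 part2 by (rule conjI)
next
  case True
  obtain c0 where c0: "c0 > 0" and bcA: "banach_const A = ereal c0"
    and Aop: "\<And>\<kappa>. 0 < \<kappa> \<Longrightarrow> \<kappa> < c0 \<Longrightarrow> \<forall>y. \<exists>x. A x = y \<and> \<kappa> * norm x \<le> norm y"
    using banach_const_finite[OF A_lin A_surj True] by blast
  have Aopen: "\<forall>y. \<exists>x. A x = y \<and> (3 * c0 / 4) * norm x \<le> norm y" using Aop[of "3 * c0 / 4"] c0 by simp
  have "eventually (\<lambda>p. dist ((\<lambda>(h, r). c h r) p) 0 < c0 / 16) (at (0, 0) within ({0<..} \<times> {0<..}))"
    by (rule tendstoD[OF c_lim]) (use c0 in simp)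
  then obtain d where d: "d > 0" and dP: "\<And>p. p \<in> {0<..} \<times> {0<..} \<Longrightarrow> p \<noteq> (0, 0) \<Longrightarrow> dist p (0, 0) < d \<Longrightarrow>
      dist ((\<lambda>(h, r). c h r) p) 0 < c0 / 16"
    unfolding eventually_at by blast
  define r0 where "r0 = min (d / 3) (R / 2)"
  have r0: "r0 > 0" "r0 < R" using d R_pos by (auto simp: r0_def)
  have cr0: "c h r0 < c0 / 16" if "0 < h" "h \<le> d / 3" for h
  proof -
    have "dist (h, r0) (0, 0) \<le> norm h + norm r0" using norm_Pair_le[of h r0] by (simp add: dist_norm)
    also have "\<dots> < d" using that r0 d by (simp add: r0_def)
    finally have "dist ((\<lambda>(h, r). c h r) (h, r0)) 0 < c0 / 16" using that r0 by (intro dP) auto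
    then show ?thesis by simp
  qed
  define \<eta> where "\<eta> = (r0 / 4) / (1 + 2 / c0)"
  have pos12: "1 + 2 / c0 > 0" using c0 by (simp add: add_pos_pos)
  then have eta: "\<eta> > 0" using r0 unfolding \<eta>_def by (intro divide_pos_pos) auto
  have ev1: "eventually (\<lambda>h. onorm (\<lambda>x. A x - Ahat h x) < c0 / 16) (at_right 0)"
    by (rule order_tendstoD(2)[OF Ahat_lim1]) (use c0 in simp)
  have ev2: "eventually (\<lambda>h. onorm_on (Xh h) (\<lambda>x. Ah h x - Ahat h x) < c0 / 16) (at_right 0)"
    by (rule order_tendstoD(2)[OF Ahat_lim2]) (use c0 in simp)
  have ev3: "eventually (\<lambda>h. norm (F h (xt h)) + norm (xbar - xt h) < \<eta>) (at_right (0::real))"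
    using order_tendstoD(2)[OF eps eta] .
  obtain b where b: "b > 0" and bP: "\<And>h. h > 0 \<Longrightarrow> h < b \<Longrightarrow>
      onorm (\<lambda>x. A x - Ahat h x) < c0 / 16 \<and> onorm_on (Xh h) (\<lambda>x. Ah h x - Ahat h x) < c0 / 16 \<and>
      norm (F h (xt h)) + norm (xbar - xt h) < \<eta>"
    using eventually_conj[OF ev1 eventually_conj[OF ev2 ev3]] unfolding eventually_at_right_field by auto
  define h0 where "h0 = min (b / 2) (d / 3)"
  have h0: "h0 > 0" using b d by (simp add: h0_def)
  define P where "P h x \<longleftrightarrow> x \<in> Xh h \<and> F h x = 0 \<and>
     norm (xbar - x) \<le> (1 + 2 / c0) * norm (xbar - xt h) + (2 / c0) * norm (F h (xt h)) \<and>
     metric_reg_with (Xh h) (Yh h) (F h) x (c0 / 2) \<and> x \<in> cball xbar (r0 / 4) \<and>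
     (bij A \<longrightarrow> strongly_metrically_regular_on (Xh h) (Yh h) (F h) x \<and>
        (\<forall>z\<in>cball xbar (r0 / 4) \<inter> Xh h. F h z = 0 \<longrightarrow> z = x))" for h x
  have exP: "\<exists>x. P h x" if h: "0 < h" "h \<le> h0" for h
  proof -
    have hb: "h < b" and hd: "h \<le> d / 3" using h b by (auto simp: h0_def)
    note bh = bP[OF h(1) hb]
    note ss = subsp[OF h(1)]
    interpret Ahh: bounded_linear "Ahat h" using Ahat_lin h by blast
    have blo: "bounded_linear_on (Xh h) (Yh h) (Ah h)" using Ah_lin h by blast
    have d1: "\<forall>w. norm (A w - Ahat h w) \<le> onorm (\<lambda>x. A x - Ahat h x) * norm w"
      using onorm[OF bounded_linear_sub[OF A_lin Ahat_lin[OF h(1)]]] by blast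
    have d1p: "onorm (\<lambda>x. A x - Ahat h x) \<ge> 0"
      using onorm_pos_le[OF bounded_linear_sub[OF A_lin Ahat_lin[OF h(1)]]] .
    obtain K where K: "\<forall>x\<in>Xh h. norm (Ah h x) \<le> K * norm x" using blo unfolding bounded_linear_on_def by blast
    have hS0: "0 \<in> Xh h" using ss subspace_0 by blast
    have hS1: "\<forall>c. \<forall>x\<in>Xh h. c *\<^sub>R x \<in> Xh h" using ss subspace_scale by blast
    have hS2: "\<forall>ca. \<forall>x\<in>Xh h. Ah h (ca *\<^sub>R x) - Ahat h (ca *\<^sub>R x) = ca *\<^sub>R (Ah h x - Ahat h x)"
      using blo by (simp add: bounded_linear_on_def Ahh.scaleR scaleR_diff_right)
    have hS3: "\<forall>x\<in>Xh h. norm (Ah h x - Ahat h x) \<le> (K + onorm (Ahat h)) * norm x"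
    proof
      fix x assume "x \<in> Xh h"
      have "norm (Ah h x - Ahat h x) \<le> norm (Ah h x) + norm (Ahat h x)" by (rule norm_triangle_ineq4)
      also have "\<dots> \<le> K * norm x + onorm (Ahat h) * norm x"
        using K \<open>x \<in> Xh h\<close> onorm[OF Ahat_lin[OF h(1)]] by (intro add_mono) auto
      finally show "norm (Ah h x - Ahat h x) \<le> (K + onorm (Ahat h)) * norm x" by (simp add: algebra_simps)
    qed
    note obb = onorm_on_bound[where f="\<lambda>x. Ah h x - Ahat h x", OF hS0 hS1 hS2 hS3]
    have ob: "(\<forall>w\<in>Xh h. norm (Ah h w - Ahat h w) \<le> onorm_on (Xh h) (\<lambda>x. Ah h x - Ahat h x) * norm w) \<and>
        onorm_on (Xh h) (\<lambda>x. Ah h x - Ahat h x) \<ge> 0" using obb by simp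
    have chp: "c h r0 \<ge> 0" using c_nonneg h r0 by blast
    have est: "\<forall>x\<in>Xh h \<inter> cball (xt h) r0. \<forall>z\<in>Xh h \<inter> cball (xt h) r0.
        norm (F h x - F h z - Ah h (x - z)) \<le> c h r0 * norm (x - z)"
      using approx[OF h(1) r0(1) r0(2)] by blast
    have sm: "onorm (\<lambda>x. A x - Ahat h x) + onorm_on (Xh h) (\<lambda>x. Ah h x - Ahat h x) + c h r0 \<le> c0 / 4"
    proof -
      have "onorm (\<lambda>x. A x - Ahat h x) < c0 / 16" "onorm_on (Xh h) (\<lambda>x. Ah h x - Ahat h x) < c0 / 16"
        using bh by auto
      then show ?thesis using cr0[OF h(1) hd] c0 by linarith
    qed
    have small: "(1 + 2 / c0) * (norm (F h (xt h)) + norm (xbar - xt h)) \<le> r0 / 4"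
    proof -
      have "(1 + 2 / c0) * (norm (F h (xt h)) + norm (xbar - xt h)) \<le> (1 + 2 / c0) * \<eta>"
        using bh c0 by (intro mult_left_mono) auto
      also have "\<dots> = r0 / 4"
      proof -
        have gen: "t * (a / t) = a" if "t > 0" for t a :: real using that by simp
        show ?thesis unfolding \<eta>_def by (rule gen[OF pos12])
      qed
      finally show ?thesis .
    qed
    have s1: "subspace (Xh h)" "closed (Xh h)" "subspace (Yh h)" using ss by auto
    have fc: "continuous_on (Xh h) (F h)" "F h ` Xh h \<subseteq> Yh h" using F_cont[OF h(1)] by auto
    have ob1: "\<forall>w\<in>Xh h. norm (Ah h w - Ahat h w) \<le> onorm_on (Xh h) (\<lambda>x. Ah h x - Ahat h x) * norm w"
      and ob2: "onorm_on (Xh h) (\<lambda>x. Ah h x - Ahat h x) \<ge> 0" using ob by auto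
    show ?thesis unfolding P_def
      using per_h[OF s1(1) s1(2) s1(3) fc(1) fc(2) xt_in[OF h(1)] Ahat_lin[OF h(1)] Ahat_pre[OF h(1)]
          A_lin Aopen c0 r0(1) est chp d1 d1p ob1 ob2 sm small] by blast
  qed
  have "\<forall>h. \<exists>x. 0 < h \<and> h \<le> h0 \<longrightarrow> P h x" using exP by blast
  then obtain xb where xb: "\<And>h. 0 < h \<Longrightarrow> h \<le> h0 \<Longrightarrow> P h (xb h)" by metis
  have twodiv: "2 / banach_const A = ereal (2 / c0)" using c0 by (simp add: bcA)
  have part1: "\<forall>h. 0 < h \<and> h \<le> h0 \<longrightarrow> xb h \<in> Xh h \<and> F h (xb h) = 0 \<and>
        ereal (norm (xbar - xb h)) \<le> (1 + 2 / banach_const A) * ereal (norm (xbar - xt h))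
            + (2 / banach_const A) * ereal (norm (F h (xt h))) \<and>
        sur_on (Xh h) (Yh h) (F h) (xb h) \<ge> banach_const A / 2"
  proof (intro allI impI conjI)
    fix h :: real assume h: "0 < h \<and> h \<le> h0"
    note Ph = xb[OF conjunct1[OF h] conjunct2[OF h], unfolded P_def]
    show "xb h \<in> Xh h" "F h (xb h) = 0" using Ph by auto
    show "ereal (norm (xbar - xb h)) \<le> (1 + 2 / banach_const A) * ereal (norm (xbar - xt h))
            + (2 / banach_const A) * ereal (norm (F h (xt h)))"
      by (rule ereal_bound[OF c0 bcA]) (use Ph in blast)
    have "ereal (c0 / 2) \<le> sur_on (Xh h) (Yh h) (F h) (xb h)"
      unfolding sur_on_def using Ph by (intro Sup_upper) auto
    then show "banach_const A / 2 \<le> sur_on (Xh h) (Yh h) (F h) (xb h)" by (simp add: bcA)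
  qed
  have part2: "bij A \<longrightarrow> (\<exists>h1 r1. 0 < h1 \<and> h1 \<le> h0 \<and> r1 > 0 \<and>
        (\<forall>h. 0 < h \<and> h \<le> h1 \<longrightarrow>
           strongly_metrically_regular_on (Xh h) (Yh h) (F h) (xb h) \<and>
           xb h \<in> cball xbar r1 \<and>
           (\<forall>x \<in> cball xbar r1 \<inter> Xh h. F h x = 0 \<longrightarrow> x = xb h)))"
  proof
    assume bA: "bij A"
    show "\<exists>h1 r1. 0 < h1 \<and> h1 \<le> h0 \<and> r1 > 0 \<and>
        (\<forall>h. 0 < h \<and> h \<le> h1 \<longrightarrow>
           strongly_metrically_regular_on (Xh h) (Yh h) (F h) (xb h) \<and>
           xb h \<in> cball xbar r1 \<and>
           (\<forall>x \<in> cball xbar r1 \<inter> Xh h. F h x = 0 \<longrightarrow> x = xb h))"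
    proof (rule exI[of _ h0], rule exI[of _ "r0 / 4"], intro conjI allI impI)
      fix h :: real assume h: "0 < h \<and> h \<le> h0"
      note Ph = xb[OF conjunct1[OF h] conjunct2[OF h], unfolded P_def]
      show "strongly_metrically_regular_on (Xh h) (Yh h) (F h) (xb h)" using Ph bA by blast
      show "xb h \<in> cball xbar (r0 / 4)" using Ph by blast
      show "\<forall>x \<in> cball xbar (r0 / 4) \<inter> Xh h. F h x = 0 \<longrightarrow> x = xb h" using Ph bA by blast
    qed (use h0 r0 in auto)
  qed
  show ?thesis
    apply (rule exI[of _ h0])
    apply (rule conjI)
     apply (rule h0)
    apply (rule exI[of _ xb])
    using part1 part2 by (rule conjI)
qed


end
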